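(* Let $\alpha\in\mathcal A\cap\mathbb R$ be simple, and for $k\in\mathbb C$ let $u(k)$, $u^*(k)$ be unit vectors spanning $\ker_{L^2_0}(D(\alpha)+k)$ and $\ker_{L^2_0}(D(\alpha)^*+\bar k)$ respectively. Then $$\langle u(k)|C|u(k)\rangle=\langle u^*(k)|C|u^*(k)\rangle\quad\text{for all }k\in\mathbb C,$$ i.e. $e_+(k)=e_-(k)$ where $e_+(k)=-\langle u(k)|C|u(k)\rangle$, $e_-(k)=-\langle u^*(k)|C|u^*(k)\rangle$.
   Context: Let $\omega=e^{2\pi i/3}$, $\Lambda=\mathbb Z\oplus\omega\mathbb Z$, $K=\frac43\pi$, $\langle z,w\rangle=\operatorname{Re}(z\bar w)$. Let $U,V\in C^\infty(\mathbb C)$ satisfy, for all $z$ and $\gamma\in\Lambda$: $U(z+\gamma)=e^{i\langle\gamma,K\rangle}U(z)$, $U(\omega z)=\omega U(z)$, $\overline{U(\bar z)}=-U(-z)$, and $V(z)=V(\bar z)=\overline{V(-z)}$, $V(\omega z)=V(z)$, $V(z+\gamma)=e^{i\langle\gamma,K\rangle}V(z)$. With $D_{\bar z}=-i\partial_{\bar z}$, $D(\alpha)=\begin{pmatrix}2D_{\bar z}&\alpha U(z)\\ \alpha U(-z)&2D_{\bar z}\end{pmatrix}$, $C=\begin{pmatrix}0&V(z)\\ V(-z)&0\end{pmatrix}$. $L_\gamma u(z)=\operatorname{diag}(e^{i\langle\gamma,K\rangle},e^{-i\langle\gamma,K\rangle})u(z+\gamma)$ and $L^2_0=L^2_0(\mathbb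 C;\mathbb C^2)=\{u\in L^2_{loc}(\mathbb C;\mathbb C^2):L_\gamma u=u\ \forall\gamma\in\Lambda\}$, with $\langle v|A|w\rangle=\int_{\mathbb C/\Lambda}(Aw)\cdot\bar v\,dm$. $\alpha$ is magic ($\alpha\in\mathcal A$) if $\ker_{L^2_0}(D(\alpha)+k)\ne\{0\}$ for all $k\in\mathbb C$, and simple if this kernel is one-dimensional for all $k$ (then also $\ker_{L^2_0}(D(\alpha)^*+\bar k)$ is one-dimensional). *)

theory Defs
  imports "HOL-Analysis.Analysis"
begin

definition omega :: complex where
  "omega = exp (2 * pi * \<i> / 3)"

definition lattice :: "complex set" where
  "lattice = {of_int m + of_int n * omega | m n. True}"

definition Kpt :: complex where
  "Kpt = of_real (4 / 3 * pi)"

definition rinner :: "complex \<Rightarrow> complex \<Rightarrow> real" where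
  "rinner z w = Re (z * cnj w)"

definition dx :: "(complex \<Rightarrow> complex) \<Rightarrow> complex \<Rightarrow> complex" where
  "dx f z = frechet_derivative f (at z) 1"

definition dy :: "(complex \<Rightarrow> complex) \<Rightarrow> complex \<Rightarrow> complex" where
  "dy f z = frechet_derivative f (at z) \<i>"

definition dzbar :: "(complex \<Rightarrow> complex) \<Rightarrow> complex \<Rightarrow> complex" where
  "dzbar f z = (dx f z + \<i> * dy f z) / 2"

definition dz :: "(complex \<Rightarrow> complex) \<Rightarrow> complex \<Rightarrow> complex" where
  "dz f z = (dx f z - \<i> * dy f z) / 2"

coinductive smooth :: "(complex \<Rightarrow> complex) \<Rightarrow> bool" where
  "\<lbrakk>\<forall>z. f differentiable (at z); smooth (dx f); smooth (dy f)\<rbrakk> \<Longrightarrow> smooth f"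

definition cell :: "complex set" where
  "cell = {of_real s + of_real t * omega | s t. 0 \<le> s \<and> s \<le> 1 \<and> 0 \<le> t \<and> t \<le> 1}"

definition L0_invariant :: "(complex \<Rightarrow> complex \<times> complex) \<Rightarrow> bool" where
  "L0_invariant u \<longleftrightarrow> (\<forall>\<gamma>\<in>lattice. \<forall>z.
      exp (\<i> * of_real (rinner \<gamma> Kpt)) * fst (u (z + \<gamma>)) = fst (u z) \<and>
      exp (- \<i> * of_real (rinner \<gamma> Kpt)) * snd (u (z + \<gamma>)) = snd (u z))"

text \<open>(Smooth) elements of L^2_0: smooth functions with L_gamma u = u.\<close>
definition L2_0 :: "(complex \<Rightarrow> complex \<times> complex) set" where
  "L2_0 = {u. smooth (\<lambda>z. fst (u z)) \<and> smooth (\<lambda>z. snd (u z)) \<and> L0_invariant u}"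

definition Dk :: "(complex \<Rightarrow> complex) \<Rightarrow> complex \<Rightarrow> complex \<Rightarrow>
    (complex \<Rightarrow> complex \<times> complex) \<Rightarrow> complex \<Rightarrow> complex \<times> complex" where
  "Dk U \<alpha> k u z =
     (2 * (- \<i>) * dzbar (\<lambda>w. fst (u w)) z + \<alpha> * U z * snd (u z) + k * fst (u z),
      \<alpha> * U (- z) * fst (u z) + 2 * (- \<i>) * dzbar (\<lambda>w. snd (u w)) z + k * snd (u z))"

text \<open>D(alpha)^* + conj k: the formal L^2 adjoint of D(alpha) (D_zbar^* = D_z = -i d_z,
  conjugate transpose of the potential), plus conj k.\<close>
definition Dadjk :: "(complex \<Rightarrow> complex) \<Rightarrow> complex \<Rightarrow> complex \<Rightarrow>
    (complex \<Rightarrow> complex \<times> complex) \<Rightarrow> complex \<Rightarrow> complex \<times> complex" where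
  "Dadjk U \<alpha> k u z =
     (2 * (- \<i>) * dz (\<lambda>w. fst (u w)) z + cnj \<alpha> * cnj (U (- z)) * snd (u z) + cnj k * fst (u z),
      cnj \<alpha> * cnj (U z) * fst (u z) + 2 * (- \<i>) * dz (\<lambda>w. snd (u w)) z + cnj k * snd (u z))"

definition kerD :: "(complex \<Rightarrow> complex) \<Rightarrow> complex \<Rightarrow> complex \<Rightarrow> (complex \<Rightarrow> complex \<times> complex) set" where
  "kerD U \<alpha> k = {u \<in> L2_0. \<forall>z. Dk U \<alpha> k u z = (0, 0)}"

definition kerDadj :: "(complex \<Rightarrow> complex) \<Rightarrow> complex \<Rightarrow> complex \<Rightarrow> (complex \<Rightarrow> complex \<times> complex) set" where
  "kerDadj U \<alpha> k = {u \<in> L2_0. \<forall>z. Dadjk U \<alpha> k u z = (0, 0)}"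

definition bracket :: "(complex \<Rightarrow> complex \<times> complex) \<Rightarrow> (complex \<Rightarrow> complex \<times> complex) \<Rightarrow> complex" where
  "bracket v w = integral cell (\<lambda>z. fst (w z) * cnj (fst (v z)) + snd (w z) * cnj (snd (v z)))"

definition Cop :: "(complex \<Rightarrow> complex) \<Rightarrow> (complex \<Rightarrow> complex \<times> complex) \<Rightarrow> complex \<Rightarrow> complex \<times> complex" where
  "Cop V u z = (V z * snd (u z), V (- z) * fst (u z))"

definition unit_vec :: "(complex \<Rightarrow> complex \<times> complex) \<Rightarrow> bool" where
  "unit_vec u \<longleftrightarrow> bracket u u = 1"

definition magic :: "(complex \<Rightarrow> complex) \<Rightarrow> complex \<Rightarrow> bool" where
  "magic U \<alpha> \<longleftrightarrow> (\<forall>k. \<exists>u\<in>kerD U \<alpha> k. u \<noteq> (\<lambda>z. (0, 0)))"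

definition one_dim :: "(complex \<Rightarrow> complex \<times> complex) set \<Rightarrow> bool" where
  "one_dim S \<longleftrightarrow> (\<exists>u\<in>S. u \<noteq> (\<lambda>z. (0, 0)) \<and> (\<forall>v\<in>S. \<exists>c::complex. v = (\<lambda>z. (c * fst (u z), c * snd (u z)))))"

definition simple_magic :: "(complex \<Rightarrow> complex) \<Rightarrow> complex \<Rightarrow> bool" where
  "simple_magic U \<alpha> \<longleftrightarrow> (\<forall>k. one_dim (kerD U \<alpha> k))"

end

theory Submission
  imports Defs
begin


lemma cbox_reflect_image:
  fixes a b c :: "'a::euclidean_space"
  shows "(\<lambda>x. c - x) ` cbox (c - b) (c - a) = cbox a b"
proof -
  have "y \<in> (\<lambda>x. c - x) ` cbox (c - b) (c - a)" if "y \<in> cbox a b" for y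
  proof
    show "y = c - (c - y)" by simp
    show "c - y \<in> cbox (c - b) (c - a)" using that by (auto simp: mem_box inner_diff_left)
  qed
  moreover have "c - x \<in> cbox a b" if "x \<in> cbox (c - b) (c - a)" for x
    using that by (auto simp: mem_box inner_diff_left)
  ultimately show ?thesis by blast
qed

lemma reflect_cbox_integral:
  fixes g :: "'a::euclidean_space \<Rightarrow> 'b::banach"
  assumes "g integrable_on cbox (c - b) (c - a)"
  shows "((\<lambda>x. g (c - x)) has_integral integral (cbox (c - b) (c - a)) g) (cbox a b)"
proof -
  have "((\<lambda>x. g ((-1) *\<^sub>R x + c)) has_integral (1 / (\<bar>-1\<bar> ^ DIM('a))) *\<^sub>R integral (cbox (c - b) (c - a)) g)
     ((\<lambda>x. (1 / (-1)) *\<^sub>R x + -((1 / (-1)) *\<^sub>R c)) ` cbox (c - b) (c - a))"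
    by (rule has_integral_affinity) (use assms in auto)
  moreover have "(\<lambda>x. (1 / (-1::real)) *\<^sub>R x + -((1 / (-1)) *\<^sub>R c)) = (\<lambda>x. c - x)"
    by (auto simp: algebra_simps)
  ultimately show ?thesis using cbox_reflect_image[of c b a] by (simp add: algebra_simps)
qed

lemma reflect_UNIV_has_integral:
  fixes g :: "'a::euclidean_space \<Rightarrow> 'b::banach"
  assumes "(g has_integral i) UNIV"
  shows "((\<lambda>x. g (c - x)) has_integral i) UNIV"
proof -
  from assms have int: "\<And>a b. g integrable_on cbox a b"
    and lim: "\<And>e. e > 0 \<Longrightarrow> \<exists>B>0. \<forall>a b. ball 0 B \<subseteq> cbox a b \<longrightarrow> norm (integral (cbox a b) g - i) < e"
    unfolding has_integral_alt'[of g] by auto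
  have I: "((\<lambda>x. g (c - x)) has_integral integral (cbox (c - b) (c - a)) g) (cbox a b)" for a b
    using reflect_cbox_integral int by blast
  show ?thesis unfolding has_integral_alt'
  proof (intro conjI allI impI)
    fix a b :: 'a show "(\<lambda>x. if x \<in> UNIV then g (c - x) else 0) integrable_on cbox a b"
      using I by auto
  next
    fix e :: real assume "e > 0"
    then obtain B where B: "B > 0" "\<forall>a b. ball 0 B \<subseteq> cbox a b \<longrightarrow> norm (integral (cbox a b) g - i) < e"
      using lim by blast
    show "\<exists>B>0. \<forall>a b. ball 0 B \<subseteq> cbox a b \<longrightarrow>
            norm (integral (cbox a b) (\<lambda>x. if x \<in> UNIV then g (c - x) else 0) - i) < e"
    proof (intro exI[of _ "B + norm c"] conjI allI impI)
      show "B + norm c > 0" using B by (simp add: add_pos_nonneg)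
      fix a b :: 'a assume sub: "ball 0 (B + norm c) \<subseteq> cbox a b"
      have "ball 0 B \<subseteq> cbox (c - b) (c - a)"
      proof
        fix y :: 'a assume "y \<in> ball 0 B"
        then have "norm y < B" by simp
        then have "norm (c - y) < B + norm c"
          using norm_triangle_ineq4[of c y] by linarith
        then have "c - y \<in> cbox a b" using sub by auto
        then have "c - (c - y) \<in> cbox (c - b) (c - a)"
          by (auto simp: mem_box inner_diff_left)
        then show "y \<in> cbox (c - b) (c - a)" by simp
      qed
      then have "norm (integral (cbox (c - b) (c - a)) g - i) < e" using B by blast
      then show "norm (integral (cbox a b) (\<lambda>x. if x \<in> UNIV then g (c - x) else 0) - i) < e"
        using I[where a=a and b=b] by (simp add: integral_unique)
    qed
  qed
qed

lemma reflect_set_integral: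
  fixes f :: "'a::euclidean_space \<Rightarrow> 'b::banach"
  assumes S: "(\<lambda>x. c - x) ` S = S"
  shows "integral S (\<lambda>x. f (c - x)) = integral S f"
proof -
  have mem: "c - x \<in> S \<longleftrightarrow> x \<in> S" for x
  proof
    assume "c - x \<in> S" then have "c - (c - x) \<in> (\<lambda>x. c - x) ` S" by blast
    then show "x \<in> S" using S by simp
  next
    assume "x \<in> S" then show "c - x \<in> S" using S by blast
  qed
  have key: "((\<lambda>x. h (c - x)) has_integral j) S" if "(h has_integral j) S" for h :: "'a \<Rightarrow> 'b" and j
  proof -
    have "((\<lambda>x. if x \<in> S then h x else 0) has_integral j) UNIV"
      using that has_integral_restrict_UNIV by blast
    from reflect_UNIV_has_integral[OF this, of c]
    have "((\<lambda>x. if x \<in> S then h (c - x) else 0) has_integral j) UNIV"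
      by (simp add: mem)
    then show ?thesis using has_integral_restrict_UNIV by blast
  qed
  show ?thesis
  proof (cases "f integrable_on S")
    case True
    then show ?thesis using key[of f] integral_unique by (blast intro: integrable_integral)
  next
    case False
    have "\<not> (\<lambda>x. f (c - x)) integrable_on S"
    proof
      assume "(\<lambda>x. f (c - x)) integrable_on S"
      then obtain j where "((\<lambda>x. f (c - x)) has_integral j) S" by (auto simp: integrable_on_def)
      from key[OF this] have "(f has_integral j) S" by simp
      with False show False by (auto simp: integrable_on_def)
    qed
    with False show ?thesis by (simp add: not_integrable_integral)
  qed
qed




lemma refl_has_derivative:
  fixes f :: "complex \<Rightarrow> complex"
  assumes "f differentiable (at (-z))"
  shows "((\<lambda>z. c * cnj (f (-z))) has_derivative
           (\<lambda>h. c * cnj (frechet_derivative f (at (-z)) (-h)))) (at z)"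
proof -
  have F: "(f has_derivative frechet_derivative f (at (-z))) (at (-z))"
    using assms frechet_derivative_works by blast
  have m: "((\<lambda>z::complex. -z) has_derivative (\<lambda>h. -h)) (at z)"
    by (auto intro!: derivative_eq_intros)
  have "((\<lambda>z. f (-z)) has_derivative (\<lambda>h. frechet_derivative f (at (-z)) (-h))) (at z)"
    using has_derivative_compose[OF m, of f] F by simp
  then show ?thesis
    by (intro has_derivative_mult_right has_derivative_cnj)
qed

lemma refl_frechet:
  fixes f :: "complex \<Rightarrow> complex"
  assumes "f differentiable (at (-z))"
  shows "frechet_derivative (\<lambda>z. c * cnj (f (-z))) (at z) =
           (\<lambda>h. c * cnj (frechet_derivative f (at (-z)) (-h)))"
  using refl_has_derivative[OF assms] frechet_derivative_at by metis

lemma refl_dx: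
  fixes f :: "complex \<Rightarrow> complex"
  assumes "f differentiable (at (-z))"
  shows "dx (\<lambda>z. c * cnj (f (-z))) z = (-c) * cnj (dx f (-z))"
proof -
  have "linear (frechet_derivative f (at (-z)))"
    using assms frechet_derivative_works has_derivative_linear by blast
  then have "frechet_derivative f (at (-z)) (-1) = - frechet_derivative f (at (-z)) 1"
    using linear_neg by blast
  then show ?thesis unfolding dx_def refl_frechet[OF assms] by simp
qed

lemma refl_dy:
  fixes f :: "complex \<Rightarrow> complex"
  assumes "f differentiable (at (-z))"
  shows "dy (\<lambda>z. c * cnj (f (-z))) z = (-c) * cnj (dy f (-z))"
proof -
  have "linear (frechet_derivative f (at (-z)))"
    using assms frechet_derivative_works has_derivative_linear by blast
  then have "frechet_derivative f (at (-z)) (-\<i>) = - frechet_derivative f (at (-z)) \<i>"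
    using linear_neg by blast
  then show ?thesis unfolding dy_def refl_frechet[OF assms] by simp
qed

lemma smooth_refl:
  assumes "smooth f"
  shows "smooth (\<lambda>z. c * cnj (f (-z)))"
proof -
  define P where "P = (\<lambda>g. \<exists>f c. smooth f \<and> g = (\<lambda>z. c * cnj (f (-z))))"
  have "P (\<lambda>z. c * cnj (f (-z)))" using assms unfolding P_def by blast
  then show ?thesis
  proof (rule smooth.coinduct[of P])
    fix g assume "P g"
    then obtain f c where f: "smooth f" and g: "g = (\<lambda>z. c * cnj (f (-z)))"
      unfolding P_def by blast
    from f have d: "\<forall>z. f differentiable at z" and sx: "smooth (dx f)" and sy: "smooth (dy f)"
      by (auto elim: smooth.cases)
    have gd: "\<forall>z. g differentiable at z"
      using refl_has_derivative d unfolding g differentiable_def by blast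
    have "dx g = (\<lambda>z. (-c) * cnj (dx f (-z)))"
      unfolding g using refl_dx d by blast
    then have "P (dx g)" unfolding P_def using sx by blast
    moreover have "dy g = (\<lambda>z. (-c) * cnj (dy f (-z)))"
      unfolding g using refl_dy d by blast
    then have "P (dy g)" unfolding P_def using sy by blast
    ultimately show "\<exists>f. g = f \<and> (\<forall>z. f differentiable at z) \<and> (P (dx f) \<or> smooth (dx f)) \<and> (P (dy f) \<or> smooth (dy f))" using gd by blast
  qed
qed




definition Sref :: "(complex \<Rightarrow> complex \<times> complex) \<Rightarrow> complex \<Rightarrow> complex \<times> complex" where
  "Sref u = (\<lambda>z. (cnj (fst (u (-z))), cnj (snd (u (-z)))))"

definition sc :: "complex \<Rightarrow> (complex \<Rightarrow> complex \<times> complex) \<Rightarrow> complex \<Rightarrow> complex \<times> complex" where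
  "sc a x = (\<lambda>z. (a * fst (x z), a * snd (x z)))"

lemma Sref_Sref[simp]: "Sref (Sref u) = u"
  by (simp add: Sref_def)

lemma Sref_sc: "Sref (sc b w) = sc (cnj b) (Sref w)"
  by (simp add: Sref_def sc_def)

lemma refl1_dz:
  fixes f :: "complex \<Rightarrow> complex"
  assumes "f differentiable (at (-z))"
  shows "dz (\<lambda>z. cnj (f (-z))) z = - cnj (dzbar f (-z))"
    and "dzbar (\<lambda>z. cnj (f (-z))) z = - cnj (dz f (-z))"
  using refl_dx[OF assms, of 1] refl_dy[OF assms, of 1]
  by (simp_all add: dz_def dzbar_def field_simps)

lemma smooth_diff: "smooth f \<Longrightarrow> f differentiable (at z)"
  by (auto elim: smooth.cases)

lemma smooth_refl1: "smooth f \<Longrightarrow> smooth (\<lambda>z. cnj (f (-z)))"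
  using smooth_refl[of f 1] by simp

lemma L0_Sref:
  assumes "L0_invariant u"
  shows "L0_invariant (Sref u)"
  unfolding L0_invariant_def
proof (intro ballI allI conjI)
  fix \<gamma> z assume g: "\<gamma> \<in> lattice"
  let ?e = "exp (\<i> * of_real (rinner \<gamma> Kpt))"
  let ?f = "exp (- \<i> * of_real (rinner \<gamma> Kpt))"
  have ef: "?e * ?f = 1" by (simp add: exp_add[symmetric])
  have ce: "cnj ?e = ?f" by (simp add: exp_cnj)
  have cf: "cnj ?f = ?e" by (simp add: exp_cnj)
  from assms g have a1: "?e * fst (u (-z - \<gamma> + \<gamma>)) = fst (u (-z - \<gamma>))"
    and a2: "?f * snd (u (-z - \<gamma> + \<gamma>)) = snd (u (-z - \<gamma>))"
    unfolding L0_invariant_def by blast+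
  have m: "-(z + \<gamma>) = -z - \<gamma>" by (simp add: algebra_simps)
  have m2: "-z - \<gamma> + \<gamma> = -z" by simp
  from a1 have a1': "fst (u (-z - \<gamma>)) = ?e * fst (u (-z))" unfolding m2 by (rule sym)
  from a2 have a2': "snd (u (-z - \<gamma>)) = ?f * snd (u (-z))" unfolding m2 by (rule sym)
  have "fst (Sref u (z + \<gamma>)) = cnj (fst (u (-z - \<gamma>)))" unfolding Sref_def fst_conv m by (rule refl)
  then have "?e * fst (Sref u (z + \<gamma>)) = ?e * cnj (?e * fst (u (-z)))"
    using a1' by simp
  also have "\<dots> = fst (Sref u z)" using ef by (simp add: ce Sref_def mult.assoc[symmetric])
  finally show "?e * fst (Sref u (z + \<gamma>)) = fst (Sref u z)" .
  have fe: "?f * ?e = 1" using ef by (simp only: mult.commute)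
  have "snd (Sref u (z + \<gamma>)) = cnj (snd (u (-z - \<gamma>)))" unfolding Sref_def snd_conv m by (rule refl)
  then have "?f * snd (Sref u (z + \<gamma>)) = ?f * cnj (?f * snd (u (-z)))"
    using a2' by simp
  also have "?f * cnj (?f * snd (u (-z))) = (?f * ?e) * cnj (snd (u (-z)))" by (simp only: complex_cnj_mult cf mult.assoc)
  also have "\<dots> = snd (Sref u z)" using fe by (simp add: Sref_def)
  finally show "?f * snd (Sref u (z + \<gamma>)) = snd (Sref u z)" .
qed

lemma L2_0_Sref:
  assumes "u \<in> L2_0" shows "Sref u \<in> L2_0"
proof -
  have "(\<lambda>z. fst (Sref u z)) = (\<lambda>z. cnj (fst (u (-z))))" "(\<lambda>z. snd (Sref u z)) = (\<lambda>z. cnj (snd (u (-z))))"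
    by (auto simp: Sref_def)
  moreover have "smooth (\<lambda>z. cnj (fst (u (-z))))" "smooth (\<lambda>z. cnj (snd (u (-z))))"
    using assms smooth_refl1 unfolding L2_0_def by blast+
  moreover have "L0_invariant (Sref u)" using assms L0_Sref unfolding L2_0_def by blast
  ultimately show ?thesis unfolding L2_0_def by simp
qed

lemma kerD_Sref:
  assumes "\<alpha> \<in> \<real>" "u \<in> kerD U \<alpha> k"
  shows "Sref u \<in> kerDadj U \<alpha> k"
proof -
  have ca: "cnj \<alpha> = \<alpha>" using assms(1) Reals_cnj_iff by blast
  have L: "u \<in> L2_0" and D: "\<And>z. Dk U \<alpha> k u z = (0, 0)" using assms(2) by (auto simp: kerD_def)
  have s1: "smooth (\<lambda>z. fst (u z))" and s2: "smooth (\<lambda>z. snd (u z))" using L by (auto simp: L2_0_def)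
  have "Dadjk U \<alpha> k (Sref u) z = (0, 0)" for z
  proof -
    have e1: "dz (\<lambda>w. fst (Sref u w)) z = - cnj (dzbar (\<lambda>w. fst (u w)) (-z))"
      using refl1_dz(1)[OF smooth_diff[OF s1]] by (simp add: Sref_def)
    have e2: "dz (\<lambda>w. snd (Sref u w)) z = - cnj (dzbar (\<lambda>w. snd (u w)) (-z))"
      using refl1_dz(1)[OF smooth_diff[OF s2]] by (simp add: Sref_def)
    from D[of "-z"] have "cnj (fst (Dk U \<alpha> k u (-z))) = 0" "cnj (snd (Dk U \<alpha> k u (-z))) = 0" by auto
    then show ?thesis unfolding Dadjk_def Dk_def e1 e2
      by (simp add: ca Sref_def algebra_simps)
  qed
  then show ?thesis using L2_0_Sref[OF L] by (simp add: kerDadj_def)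
qed

lemma kerDadj_Sref:
  assumes "\<alpha> \<in> \<real>" "u \<in> kerDadj U \<alpha> k"
  shows "Sref u \<in> kerD U \<alpha> k"
proof -
  have ca: "cnj \<alpha> = \<alpha>" using assms(1) Reals_cnj_iff by blast
  have L: "u \<in> L2_0" and D: "\<And>z. Dadjk U \<alpha> k u z = (0, 0)" using assms(2) by (auto simp: kerDadj_def)
  have s1: "smooth (\<lambda>z. fst (u z))" and s2: "smooth (\<lambda>z. snd (u z))" using L by (auto simp: L2_0_def)
  have "Dk U \<alpha> k (Sref u) z = (0, 0)" for z
  proof -
    have e1: "dzbar (\<lambda>w. fst (Sref u w)) z = - cnj (dz (\<lambda>w. fst (u w)) (-z))"
      using refl1_dz(2)[OF smooth_diff[OF s1]] by (simp add: Sref_def)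
    have e2: "dzbar (\<lambda>w. snd (Sref u w)) z = - cnj (dz (\<lambda>w. snd (u w)) (-z))"
      using refl1_dz(2)[OF smooth_diff[OF s2]] by (simp add: Sref_def)
    from D[of "-z"] have "cnj (fst (Dadjk U \<alpha> k u (-z))) = 0" "cnj (snd (Dadjk U \<alpha> k u (-z))) = 0" by auto
    then show ?thesis unfolding Dadjk_def Dk_def e1 e2
      by (simp add: ca Sref_def algebra_simps)
  qed
  then show ?thesis using L2_0_Sref[OF L] by (simp add: kerD_def)
qed




abbreviation "c0 \<equiv> 1 + omega"

lemma c0_lattice: "c0 \<in> lattice"
  unfolding lattice_def by (rule CollectI, rule exI[of _ 1], rule exI[of _ 1]) simp

lemma Re_omega: "Re omega = -1/2"
proof -
  have "Re omega = cos (2 * pi / 3)" unfolding omega_def by (simp add: Re_exp)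
  then show ?thesis using cos_120 by simp
qed

lemma omega_exp: "exp (\<i> * of_real (rinner c0 Kpt)) = omega"
proof -
  have "rinner c0 Kpt = Re (c0 * of_real (4 / 3 * pi))" unfolding rinner_def Kpt_def by simp
  also have "\<dots> = (1 + Re omega) * (4 / 3 * pi)" by simp
  also have "\<dots> = 2 * pi / 3" using Re_omega by simp
  finally have r: "rinner c0 Kpt = 2 * pi / 3" .
  have "exp (\<i> * of_real (rinner c0 Kpt)) = exp (\<i> * of_real (2 * pi / 3))" unfolding r by (rule refl)
  also have "\<dots> = omega" unfolding omega_def by (intro arg_cong[where f=exp]) (simp add: field_simps)
  finally show ?thesis .
qed

lemma omega_exp': "exp (- \<i> * of_real (rinner c0 Kpt)) = cnj omega"
  using exp_cnj[of "\<i> * of_real (rinner c0 Kpt)"] omega_exp by simp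

lemma omega_cnj: "omega * cnj omega = 1"
proof -
  have "omega * cnj omega = exp (\<i> * of_real (rinner c0 Kpt)) * exp (- \<i> * of_real (rinner c0 Kpt))"
    using omega_exp omega_exp' by simp
  also have "\<dots> = 1" by (simp add: exp_add[symmetric])
  finally show ?thesis .
qed

lemma omega_cube: "omega ^ 3 = 1"
proof -
  have "omega ^ 3 = exp (of_nat 3 * (2 * pi * \<i> / 3))" unfolding omega_def by (rule exp_of_nat_mult[symmetric])
  also have "\<dots> = exp (2 * of_real pi * \<i>)" by (intro arg_cong[where f=exp]) simp
  also have "\<dots> = 1" by (rule exp_two_pi_i)
  finally show ?thesis .
qed

lemma cell_reflect: "(\<lambda>x. c0 - x) ` cell = cell"
proof -
  have sub: "c0 - x \<in> cell" if "x \<in> cell" for x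
  proof -
    from that obtain s t where x: "x = of_real s + of_real t * omega" "0 \<le> s" "s \<le> 1" "0 \<le> t" "t \<le> 1"
      unfolding cell_def by blast
    have "c0 - x = of_real (1 - s) + of_real (1 - t) * omega" using x(1) by (simp add: algebra_simps)
    then show ?thesis unfolding cell_def using x by fastforce
  qed
  have "x \<in> (\<lambda>x. c0 - x) ` cell" if "x \<in> cell" for x
    using sub[OF that] by (intro image_eqI[of _ _ "c0 - x"]) auto
  then show ?thesis using sub by blast
qed

lemma cell_integral_reflect:
  fixes h :: "complex \<Rightarrow> complex"
  assumes "\<And>w. h (w + c0) = h w"
  shows "integral cell (\<lambda>z. h (-z)) = integral cell h"
proof -
  have "(\<lambda>z. h (-z)) = (\<lambda>z. h (c0 - z))"
    using assms[of "-_"] by (auto simp: algebra_simps)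
  then show ?thesis using reflect_set_integral[OF cell_reflect] by simp
qed




definition hC :: "(complex \<Rightarrow> complex) \<Rightarrow> (complex \<Rightarrow> complex \<times> complex) \<Rightarrow> complex \<Rightarrow> complex" where
  "hC V u w = V w * snd (u w) * cnj (fst (u w)) + V (-w) * fst (u w) * cnj (snd (u w))"

definition hN :: "(complex \<Rightarrow> complex \<times> complex) \<Rightarrow> complex \<Rightarrow> complex" where
  "hN u w = fst (u w) * cnj (fst (u w)) + snd (u w) * cnj (snd (u w))"

lemma L0_c0:
  assumes "L0_invariant u"
  shows "fst (u (w + c0)) = cnj omega * fst (u w)" "snd (u (w + c0)) = omega * snd (u w)"
proof -
  from assms c0_lattice have "exp (\<i> * of_real (rinner c0 Kpt)) * fst (u (w + c0)) = fst (u w)"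
     "exp (- \<i> * of_real (rinner c0 Kpt)) * snd (u (w + c0)) = snd (u w)"
    unfolding L0_invariant_def by blast+
  then have "omega * fst (u (w + c0)) = fst (u w)" "cnj omega * snd (u (w + c0)) = snd (u w)"
    unfolding omega_exp omega_exp' .
  then have "cnj omega * (omega * fst (u (w + c0))) = cnj omega * fst (u w)"
    "omega * (cnj omega * snd (u (w + c0))) = omega * snd (u w)" by simp_all
  then show "fst (u (w + c0)) = cnj omega * fst (u w)" "snd (u (w + c0)) = omega * snd (u w)"
    using omega_cnj by (simp_all add: mult.assoc[symmetric] mult.commute[of "cnj omega" omega])
qed

lemma V_c0:
  assumes V_per: "\<forall>z. \<forall>\<gamma>\<in>lattice. V (z + \<gamma>) = exp (\<i> * of_real (rinner \<gamma> Kpt)) * V z"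
  shows "V (w + c0) = omega * V w" "V (-(w + c0)) = cnj omega * V (-w)"
proof -
  show "V (w + c0) = omega * V w" using V_per c0_lattice omega_exp by metis
  have "V (-(w + c0) + c0) = omega * V (-(w + c0))" using V_per c0_lattice omega_exp by metis
  then have "V (-w) = omega * V (-(w + c0))" by simp
  then have "cnj omega * V (-w) = (cnj omega * omega) * V (-(w + c0))" by (simp add: mult.assoc)
  then show "V (-(w + c0)) = cnj omega * V (-w)" using omega_cnj by (simp add: mult.commute)
qed

lemma cnj_omega_cube: "cnj omega ^ 3 = 1"
  using omega_cube by (metis complex_cnj_one complex_cnj_power)

lemma hC_per:
  assumes V_per: "\<forall>z. \<forall>\<gamma>\<in>lattice. V (z + \<gamma>) = exp (\<i> * of_real (rinner \<gamma> Kpt)) * V z"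
    and L: "L0_invariant u"
  shows "hC V u (w + c0) = hC V u w"
proof -
  have "hC V u (w + c0) = omega ^ 3 * (V w * snd (u w) * cnj (fst (u w)))
      + cnj omega ^ 3 * (V (-w) * fst (u w) * cnj (snd (u w)))"
    unfolding hC_def L0_c0[OF L] V_c0[OF V_per] by (simp add: power3_eq_cube algebra_simps)
  then show ?thesis using omega_cube cnj_omega_cube by (simp add: hC_def)
qed

lemma hN_per:
  assumes L: "L0_invariant u"
  shows "hN u (w + c0) = hN u w"
proof -
  have "hN u (w + c0) = (omega * cnj omega) * hN u w"
    unfolding hN_def L0_c0[OF L] by (simp add: algebra_simps)
  then show ?thesis using omega_cnj by simp
qed

lemma bracket_C: "bracket u (Cop V u) = integral cell (hC V u)"
  unfolding bracket_def Cop_def hC_def by simp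

lemma bracket_N: "bracket u u = integral cell (hN u)"
  unfolding bracket_def hN_def by simp

lemma bracket_C_Sref: "bracket (Sref u) (Cop V (Sref u)) = integral cell (\<lambda>z. hC V u (-z))"
  unfolding bracket_def Cop_def hC_def Sref_def
  by (rule arg_cong[where f="integral cell"], rule ext) (simp add: algebra_simps)

lemma bracket_N_Sref: "bracket (Sref u) (Sref u) = integral cell (\<lambda>z. hN u (-z))"
  unfolding bracket_def hN_def Sref_def
  by (rule arg_cong[where f="integral cell"], rule ext) (simp add: algebra_simps)

lemma bracket_C_sc: "bracket (sc a u) (Cop V (sc a u)) = (a * cnj a) * bracket u (Cop V u)"
proof -
  have "bracket (sc a u) (Cop V (sc a u)) = integral cell (\<lambda>z. (a * cnj a) * hC V u z)"
    unfolding bracket_def Cop_def hC_def sc_def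
    by (rule arg_cong[where f="integral cell"], rule ext) (simp add: algebra_simps)
  then show ?thesis by (simp add: bracket_C)
qed

lemma bracket_N_sc: "bracket (sc a u) (sc a u) = (a * cnj a) * bracket u u"
proof -
  have "bracket (sc a u) (sc a u) = integral cell (\<lambda>z. (a * cnj a) * hN u z)"
    unfolding bracket_def hN_def sc_def
    by (rule arg_cong[where f="integral cell"], rule ext) (simp add: algebra_simps)
  then show ?thesis by (simp add: bracket_N)
qed

lemma Sref_C:
  assumes V_per: "\<forall>z. \<forall>\<gamma>\<in>lattice. V (z + \<gamma>) = exp (\<i> * of_real (rinner \<gamma> Kpt)) * V z"
    and L: "L0_invariant u"
  shows "bracket (Sref u) (Cop V (Sref u)) = bracket u (Cop V u)"
proof -
  have "integral cell (\<lambda>z. hC V u (-z)) = integral cell (hC V u)"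
    by (rule cell_integral_reflect) (rule hC_per[OF V_per L])
  then show ?thesis using bracket_C_Sref bracket_C[where u=u] by simp
qed

lemma Sref_N:
  assumes L: "L0_invariant u"
  shows "bracket (Sref u) (Sref u) = bracket u u"
proof -
  have "integral cell (\<lambda>z. hN u (-z)) = integral cell (hN u)"
    by (rule cell_integral_reflect) (rule hN_per[OF L])
  then show ?thesis using bracket_N_Sref bracket_N[where u=u] by simp
qed




theorem lemma3p2:
  fixes U V :: "complex \<Rightarrow> complex" and \<alpha> :: complex
  assumes U_smooth: "smooth U" and V_smooth: "smooth V"
    and U_per: "\<forall>z. \<forall>\<gamma>\<in>lattice. U (z + \<gamma>) = exp (\<i> * of_real (rinner \<gamma> Kpt)) * U z"
    and U_rot: "\<forall>z. U (omega * z) = omega * U z"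
    and U_sym: "\<forall>z. cnj (U (cnj z)) = - U (- z)"
    and V_sym: "\<forall>z. V z = V (cnj z) \<and> V (cnj z) = cnj (V (- z))"
    and V_rot: "\<forall>z. V (omega * z) = V z"
    and V_per: "\<forall>z. \<forall>\<gamma>\<in>lattice. V (z + \<gamma>) = exp (\<i> * of_real (rinner \<gamma> Kpt)) * V z"
    and real: "\<alpha> \<in> \<real>"
    and magic: "magic U \<alpha>"
    and simple: "simple_magic U \<alpha>"
  shows "\<forall>k u us. u \<in> kerD U \<alpha> k \<and> unit_vec u \<and> us \<in> kerDadj U \<alpha> k \<and> unit_vec us \<longrightarrow>
           bracket u (Cop V u) = bracket us (Cop V us)"
proof (intro allI impI)
  fix k u us
  assume H: "u \<in> kerD U \<alpha> k \<and> unit_vec u \<and> us \<in> kerDadj U \<alpha> k \<and> unit_vec us"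
  from simple obtain w where w: "w \<in> kerD U \<alpha> k"
    and all: "\<forall>v\<in>kerD U \<alpha> k. \<exists>c. v = (\<lambda>z. (c * fst (w z), c * snd (w z)))"
    unfolding simple_magic_def one_dim_def by blast
  obtain a where ua: "u = sc a w" using all H unfolding sc_def by blast
  have "Sref us \<in> kerD U \<alpha> k" using kerDadj_Sref[OF real] H by blast
  then obtain b where vb: "Sref us = sc b w" using all unfolding sc_def by blast
  have usb: "us = sc (cnj b) (Sref w)"
  proof -
    have "us = Sref (Sref us)" by simp
    also have "\<dots> = sc (cnj b) (Sref w)" unfolding vb Sref_sc ..
    finally show ?thesis .
  qed
  have Lw: "L0_invariant w" using w unfolding kerD_def L2_0_def by blast
  have 1: "(a * cnj a) * bracket w w = 1"
    using H bracket_N_sc[of a w] unfolding ua unit_vec_def by simp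
  have "(cnj b * b) * bracket (Sref w) (Sref w) = 1"
    using H bracket_N_sc[of "cnj b" "Sref w"] unfolding usb unit_vec_def by simp
  then have 2: "(cnj b * b) * bracket w w = 1" using Sref_N[OF Lw] by simp
  have nz: "bracket w w \<noteq> 0" using 1 by auto
  have ab: "a * cnj a = cnj b * b"
    using 1 2 nz by (metis mult_right_cancel)
  have "bracket u (Cop V u) = (a * cnj a) * bracket w (Cop V w)"
    unfolding ua by (rule bracket_C_sc)
  also have "\<dots> = (cnj b * b) * bracket (Sref w) (Cop V (Sref w))"
    using ab Sref_C[OF V_per Lw] by simp
  also have "\<dots> = bracket us (Cop V us)"
    unfolding usb bracket_C_sc by simp
  finally show "bracket u (Cop V u) = bracket us (Cop V us)" .
qed


end
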